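(* Let $\mathcal{Q}$ be a parabolic subset of $\mathcal{R}$, $\mathrm{s}$ an involution of $\mathcal{R}$, and $C$ a $V$-fit Weyl chamber for $(\mathcal{Q},\mathrm{s})$, with $\Phi_C=\mathcal{B}(C)\cap\mathcal{Q}^n$. The following are equivalent: (1) $\mathcal{Q}\cup\mathrm{s}(\mathcal{Q})=\mathcal{R}$ (i.e. $(\mathcal{Q},\mathrm{s})$ is totally complex); (2) $\mathrm{s}(\mathcal{Q}^n)\subseteq\mathcal{R}^-(C)$; (3) $\mathrm{s}(\Phi_C)\subseteq\mathcal{R}^-(C)$.
   Context: $\mathcal{R}$ is a reduced root system in a Euclidean space $V$. Closed subset: $\alpha,\beta\in\mathcal{Q}$, $\alpha+\beta\in\mathcal{R}\Rightarrow\alpha+\beta\in\mathcal{Q}$; parabolic: closed with $\mathcal{Q}\cup(-\mathcal{Q})=\mathcal{R}$. $\mathcal{Q}^n=\{\alpha\in\mathcal{Q}\mid-\alpha\notin\mathcal{Q}\}$. For a Weyl chamber $C$: $\mathcal{R}^\pm(C)$ positive/negative roots, $\mathcal{B}(C)$ simple roots. $C$ is admissible for $\mathcal{Q}$ if $\mathcal{R}^+(C)\subseteq\mathcal{Q}$. An involution of $\mathcal{R}$ is a linear isometric involution $\mathrm{s}$ of $V$ with $\mathrm{s}(\mathcal{R})=\mathcal{R}$; a root $\alpha$ is real if $\mathrm{s}(\alpha)=\alpha$, imaginary if $\mathrm{s}(\alpha)=-\alpha$, complex otherwise. An admissible chamber $C$ is $V$-fit for $(\mathcal{Q},\mathrm{s})$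 if $\mathrm{s}(\alpha)\in\mathcal{R}^-(C)$ for every complex $\alpha\in\mathcal{B}(C)\setminus\Phi_C$. *)

theory Defs
  imports "HOL-Analysis.Analysis"
begin

definition reduced_root_system :: "'a::euclidean_space set \<Rightarrow> bool" where
  "reduced_root_system R \<longleftrightarrow>
     finite R \<and> 0 \<notin> R \<and> span R = UNIV \<and>
     (\<forall>\<alpha>\<in>R. \<forall>\<beta>\<in>R. 2 * (\<beta> \<bullet> \<alpha>) / (\<alpha> \<bullet> \<alpha>) \<in> \<int> \<and>
                 \<beta> - (2 * (\<beta> \<bullet> \<alpha>) / (\<alpha> \<bullet> \<alpha>)) *\<^sub>R \<alpha> \<in> R) \<and>
     (\<forall>\<alpha>\<in>R. \<forall>c::real. c *\<^sub>R \<alpha> \<in> R \<longrightarrow> c = 1 \<or> c = -1)"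

definition closed_subset :: "'a::euclidean_space set \<Rightarrow> 'a set \<Rightarrow> bool" where
  "closed_subset R Q \<longleftrightarrow> Q \<subseteq> R \<and>
     (\<forall>\<alpha>\<in>Q. \<forall>\<beta>\<in>Q. \<alpha> + \<beta> \<in> R \<longrightarrow> \<alpha> + \<beta> \<in> Q)"

definition parabolic_subset :: "'a::euclidean_space set \<Rightarrow> 'a set \<Rightarrow> bool" where
  "parabolic_subset R Q \<longleftrightarrow> closed_subset R Q \<and> Q \<union> uminus ` Q = R"

definition nilpart :: "'a::euclidean_space set \<Rightarrow> 'a set" where
  "nilpart Q = {\<alpha>\<in>Q. - \<alpha> \<notin> Q}"

definition regular_set :: "'a::euclidean_space set \<Rightarrow> 'a set" where
  "regular_set R = UNIV - (\<Union>\<alpha>\<in>R. {v. v \<bullet> \<alpha> = 0})"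

definition weyl_chamber :: "'a::euclidean_space set \<Rightarrow> 'a set \<Rightarrow> bool" where
  "weyl_chamber R C \<longleftrightarrow>
     (\<exists>x \<in> regular_set R. C = connected_component_set (regular_set R) x)"

definition pos_roots :: "'a::euclidean_space set \<Rightarrow> 'a set \<Rightarrow> 'a set" where
  "pos_roots R C = {\<alpha>\<in>R. \<forall>x\<in>C. x \<bullet> \<alpha> > 0}"

definition neg_roots :: "'a::euclidean_space set \<Rightarrow> 'a set \<Rightarrow> 'a set" where
  "neg_roots R C = {\<alpha>\<in>R. \<forall>x\<in>C. x \<bullet> \<alpha> < 0}"

definition simple_roots :: "'a::euclidean_space set \<Rightarrow> 'a set \<Rightarrow> 'a set" where
  "simple_roots R C = {\<alpha>\<in>pos_roots R C.
      \<not> (\<exists>\<beta>\<in>pos_roots R C. \<exists>\<gamma>\<in>pos_roots R C. \<alpha> = \<beta> + \<gamma>)}"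

definition admissible :: "'a::euclidean_space set \<Rightarrow> 'a set \<Rightarrow> 'a set \<Rightarrow> bool" where
  "admissible R Q C \<longleftrightarrow> weyl_chamber R C \<and> pos_roots R C \<subseteq> Q"

definition root_involution :: "'a::euclidean_space set \<Rightarrow> ('a \<Rightarrow> 'a) \<Rightarrow> bool" where
  "root_involution R s \<longleftrightarrow> linear s \<and> (\<forall>x. s (s x) = x) \<and>
     (\<forall>x. norm (s x) = norm x) \<and> s ` R = R"

definition complex_root :: "('a::euclidean_space \<Rightarrow> 'a) \<Rightarrow> 'a \<Rightarrow> bool" where
  "complex_root s \<alpha> \<longleftrightarrow> s \<alpha> \<noteq> \<alpha> \<and> s \<alpha> \<noteq> - \<alpha>"

definition Phi :: "'a::euclidean_space set \<Rightarrow> 'a set \<Rightarrow> 'a set \<Rightarrow> 'a set" where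
  "Phi R Q C = simple_roots R C \<inter> nilpart Q"

definition V_fit :: "'a::euclidean_space set \<Rightarrow> 'a set \<Rightarrow> ('a \<Rightarrow> 'a) \<Rightarrow> 'a set \<Rightarrow> bool" where
  "V_fit R Q s C \<longleftrightarrow> admissible R Q C \<and>
     (\<forall>\<alpha>\<in>simple_roots R C - Phi R Q C. complex_root s \<alpha> \<longrightarrow> s \<alpha> \<in> neg_roots R C)"

end

theory Submission
  imports Defs
begin


lemma rr_neg:
  assumes "reduced_root_system R" "a \<in> R" shows "-a \<in> R"
proof -
  have "a \<noteq> 0" using assms unfolding reduced_root_system_def by auto
  hence nz: "a \<bullet> a \<noteq> 0" by simp
  have "a - (2 * (a \<bullet> a) / (a \<bullet> a)) *\<^sub>R a \<in> R" using assms unfolding reduced_root_system_def by blast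
  moreover have "a - (2 * (a \<bullet> a) / (a \<bullet> a)) *\<^sub>R a = -a" using nz
    by (simp add: scaleR_2 algebra_simps)
  ultimately show ?thesis by simp
qed

lemma rr_acute:
  assumes rr: "reduced_root_system R" and a: "a\<in>R" and b: "b\<in>R" and ne: "a\<noteq>b"
    and pos: "a \<bullet> b > 0"
  shows "a - b \<in> R \<or> b - a \<in> R"
proof -
  have a0: "a \<bullet> a > 0" and b0: "b \<bullet> b > 0" using rr a b unfolding reduced_root_system_def
    by (metis inner_gt_zero_iff)+
  define p where "p = 2 * (b \<bullet> a) / (a \<bullet> a)"
  define q where "q = 2 * (a \<bullet> b) / (b \<bullet> b)"
  have pZ: "p \<in> \<int>" and qZ: "q \<in> \<int>" and pR: "b - p *\<^sub>R a \<in> R" and qR: "a - q *\<^sub>R b \<in> R"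
    using rr a b unfolding reduced_root_system_def p_def q_def by blast+
  have pp: "p > 0" "q > 0" using a0 b0 pos by (simp_all add: p_def q_def inner_commute)
  have strict: "(a \<bullet> b)^2 < (a \<bullet> a) * (b \<bullet> b)"
  proof (rule ccontr)
    assume "\<not> ?thesis"
    moreover have "(a \<bullet> b)^2 \<le> (a \<bullet> a) * (b \<bullet> b)" by (rule Cauchy_Schwarz_ineq)
    ultimately have eq: "(a \<bullet> b)^2 = (a \<bullet> a) * (b \<bullet> b)" by linarith
    define t where "t = (a \<bullet> b) / (a \<bullet> a)"
    have "(b - t *\<^sub>R a) \<bullet> (b - t *\<^sub>R a) = b \<bullet> b - 2*t*(a \<bullet> b) + t^2 * (a \<bullet> a)"
      by (simp add: inner_diff inner_commute algebra_simps power2_eq_square)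
    also have "\<dots> = 0" using eq a0 unfolding t_def by (simp add: field_simps power2_eq_square)
    finally have bt: "b = t *\<^sub>R a" by simp
    have "t = 1 \<or> t = -1" using rr a b bt unfolding reduced_root_system_def by metis
    then show False
    proof
      assume "t = 1" thus False using ne bt by simp
    next
      assume "t = -1" hence "a \<bullet> b = - (a \<bullet> a)" using bt by simp
      thus False using pos a0 by linarith
    qed
  qed
  have "p * q = 4 * (a \<bullet> b)^2 / ((a \<bullet> a) * (b \<bullet> b))"
    by (simp add: p_def q_def inner_commute field_simps power2_eq_square)
  also have "\<dots> < 4" using strict a0 b0 by (simp add: field_simps)
  finally have pq: "p * q < 4" .
  obtain m where m: "p = of_int m" using pZ Ints_cases by blast
  obtain n where n: "q = of_int n" using qZ Ints_cases by blast
  have m0: "m \<ge> 1" "n \<ge> 1" using pp m n by auto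
  have mn: "m * n < 4" using pq m n by (metis of_int_less_iff of_int_mult of_int_numeral)
  have "m = 1 \<or> n = 1"
  proof (rule ccontr)
    assume "\<not> ?thesis"
    hence "m \<ge> 2" "n \<ge> 2" using m0 by auto
    hence "m * n \<ge> 2 * 2" by (intro mult_mono) auto
    thus False using mn by simp
  qed
  thus ?thesis using pR qR m n by auto
qed



lemma chamber_basic:
  assumes "weyl_chamber R C"
  shows "C \<noteq> {}" "C \<subseteq> regular_set R" "connected C"
proof -
  obtain x where x: "x \<in> regular_set R" "C = connected_component_set (regular_set R) x"
    using assms unfolding weyl_chamber_def by blast
  have "x \<in> C" using x connected_component_refl_eq[of "regular_set R" x] by simp
  thus "C \<noteq> {}" by blast
  show "C \<subseteq> regular_set R" using x connected_component_subset by metis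
  show "connected C" using x connected_connected_component by metis
qed

lemma chamber_sign:
  assumes wc: "weyl_chamber R C" and a: "a \<in> R"
  shows "a \<in> pos_roots R C \<or> a \<in> neg_roots R C"
proof (rule ccontr)
  assume "\<not> ?thesis"
  then obtain y z where yz: "y \<in> C" "\<not> y \<bullet> a > 0" "z \<in> C" "\<not> z \<bullet> a < 0"
    unfolding pos_roots_def neg_roots_def using a by auto
  have "a \<bullet> y \<le> 0" "0 \<le> a \<bullet> z" using yz by (simp_all add: inner_commute)
  then obtain w where w: "w \<in> C" "a \<bullet> w = 0"
    using connected_ivt_hyperplane[OF chamber_basic(3)[OF wc] \<open>y \<in> C\<close> \<open>z \<in> C\<close>] by blast
  then have "w \<in> regular_set R" using chamber_basic(2)[OF wc] by auto
  moreover have "w \<bullet> a = 0" using w(2) by (simp only: inner_commute)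
  ultimately show False using a unfolding regular_set_def by blast
qed


lemma pos_not_neg:
  assumes "weyl_chamber R C" "a \<in> pos_roots R C" shows "a \<notin> neg_roots R C"
proof
  assume "a \<in> neg_roots R C"
  moreover obtain x where "x \<in> C" using chamber_basic(1)[OF assms(1)] by blast
  ultimately show False using assms(2) unfolding pos_roots_def neg_roots_def
    by (metis (no_types, lifting) mem_Collect_eq order_less_asym)
qed

lemma neg_imp_pos:
  assumes "reduced_root_system R" "a \<in> neg_roots R C" shows "-a \<in> pos_roots R C"
proof -
  have "a \<in> R" "\<forall>x\<in>C. x \<bullet> a < 0" using assms(2) unfolding neg_roots_def by auto
  moreover have "-a \<in> R" using rr_neg[OF assms(1) \<open>a \<in> R\<close>] .
  ultimately show ?thesis unfolding pos_roots_def by simp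
qed

lemma pos_imp_neg:
  assumes "reduced_root_system R" "a \<in> pos_roots R C" shows "-a \<in> neg_roots R C"
proof -
  have "a \<in> R" "\<forall>x\<in>C. x \<bullet> a > 0" using assms(2) unfolding pos_roots_def by auto
  moreover have "-a \<in> R" using rr_neg[OF assms(1) \<open>a \<in> R\<close>] .
  ultimately show ?thesis unfolding neg_roots_def by simp
qed

lemma simple_obtuse:
  assumes rr: "reduced_root_system R" and wc: "weyl_chamber R C"
    and a: "a \<in> simple_roots R C" and b: "b \<in> simple_roots R C" and ne: "a \<noteq> b"
  shows "a \<bullet> b \<le> 0"
proof (rule ccontr)
  assume "\<not> ?thesis"
  hence pos: "a \<bullet> b > 0" by simp
  have ap: "a \<in> pos_roots R C" and bp: "b \<in> pos_roots R C" using a b unfolding simple_roots_def by auto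
  hence aR: "a \<in> R" and bR: "b \<in> R" unfolding pos_roots_def by auto
  have key: False if "u \<in> simple_roots R C" "v \<in> simple_roots R C" "u - v \<in> R" for u v
  proof -
    have up: "u \<in> pos_roots R C" "v \<in> pos_roots R C" using that unfolding simple_roots_def by auto
    from chamber_sign[OF wc that(3)] show False
    proof
      assume "u - v \<in> pos_roots R C"
      moreover have nd: "\<forall>\<beta>\<in>pos_roots R C. \<forall>\<gamma>\<in>pos_roots R C. u \<noteq> \<beta> + \<gamma>"
        using that(1) unfolding simple_roots_def by blast
      ultimately show False using nd[rule_format, OF up(2)] by force
    next
      assume "u - v \<in> neg_roots R C"
      hence "v - u \<in> pos_roots R C" using neg_imp_pos[OF rr] by fastforce
      moreover have nd: "\<forall>\<beta>\<in>pos_roots R C. \<forall>\<gamma>\<in>pos_roots R C. v \<noteq> \<beta> + \<gamma>"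
        using that(2) unfolding simple_roots_def by blast
      ultimately show False using nd[rule_format, OF up(1)] by force
    qed
  qed
  from rr_acute[OF rr aR bR ne pos] show False using key a b by blast
qed



lemma pos_sub_R: "pos_roots R C \<subseteq> R" unfolding pos_roots_def by auto

lemma simple_sub_pos: "simple_roots R C \<subseteq> pos_roots R C" unfolding simple_roots_def by auto

lemma simple_indep:
  assumes rr: "reduced_root_system R" and wc: "weyl_chamber R C"
  shows "independent (simple_roots R C)"
proof -
  let ?B = "simple_roots R C"
  have finR: "finite R" using rr unfolding reduced_root_system_def by blast
  have finB: "finite ?B" using simple_sub_pos pos_sub_R finR by (metis finite_subset)
  obtain x where x: "x \<in> C" using chamber_basic(1)[OF wc] by blast
  have xb: "x \<bullet> b > 0" if "b \<in> ?B" for b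
    using that x simple_sub_pos unfolding pos_roots_def by blast
  show ?thesis unfolding independent_explicit
  proof (intro conjI finB allI impI ballI)
    fix c v
    assume sum0: "(\<Sum>v\<in>?B. c v *\<^sub>R v) = 0" and v: "v \<in> ?B"
    define P where "P = {v\<in>?B. c v > 0}"
    define N where "N = {v\<in>?B. c v < 0}"
    have finP: "finite P" and finN: "finite N" using finB unfolding P_def N_def by auto
    have disj: "P \<inter> N = {}" unfolding P_def N_def by auto
    have "(\<Sum>v\<in>?B. c v *\<^sub>R v) = (\<Sum>v\<in>P \<union> N. c v *\<^sub>R v)"
      by (rule sum.mono_neutral_right[OF finB]) (auto simp: P_def N_def)
    also have "\<dots> = (\<Sum>v\<in>P. c v *\<^sub>R v) + (\<Sum>v\<in>N. c v *\<^sub>R v)"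
      by (rule sum.union_disjoint[OF finP finN disj])
    finally have split: "(\<Sum>v\<in>P. c v *\<^sub>R v) + (\<Sum>v\<in>N. c v *\<^sub>R v) = 0" using sum0 by simp
    define w where "w = (\<Sum>v\<in>P. c v *\<^sub>R v)"
    have w2: "w = (\<Sum>v\<in>N. (- c v) *\<^sub>R v)"
    proof -
      have 1: "(\<Sum>v\<in>N. (- c v) *\<^sub>R v) = - (\<Sum>v\<in>N. c v *\<^sub>R v)"
        by (simp add: sum_negf)
      have "w = - (\<Sum>v\<in>N. c v *\<^sub>R v)" using split unfolding w_def by (simp only: eq_neg_iff_add_eq_0)
      thus ?thesis using 1 by simp
    qed
    have "w \<bullet> w = (\<Sum>v\<in>P. c v *\<^sub>R v) \<bullet> (\<Sum>v\<in>N. (- c v) *\<^sub>R v)"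
      using w2 w_def by metis
    also have "\<dots> = (\<Sum>p\<in>P. \<Sum>n\<in>N. (c p * (- c n)) * (p \<bullet> n))"
      by (simp only: inner_sum_left inner_sum_right) (subst sum.swap, simp add: algebra_simps)
    also have "\<dots> \<le> 0"
    proof (intro sum_nonpos)
      fix p n assume p: "p \<in> P" and n: "n \<in> N"
      have "p \<noteq> n" using p n disj by auto
      hence "p \<bullet> n \<le> 0" using simple_obtuse[OF rr wc] p n unfolding P_def N_def by auto
      moreover have "c p * (- c n) > 0" using p n unfolding P_def N_def by (simp add: mult_pos_neg)
      ultimately show "(c p * (- c n)) * (p \<bullet> n) \<le> 0" using mult_nonneg_nonpos[of "c p * (- c n)" "p \<bullet> n"] by linarith
    qed
    finally have "w = 0" by (metis inner_gt_zero_iff not_le)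
    have "P = {}"
    proof (rule ccontr)
      assume ne: "P \<noteq> {}"
      have "x \<bullet> w = (\<Sum>p\<in>P. c p * (x \<bullet> p))" unfolding w_def by (simp add: inner_sum_right)
      also have "\<dots> > 0" using ne finP xb unfolding P_def by (intro sum_pos) auto
      finally show False using \<open>w = 0\<close> by simp
    qed
    have "N = {}"
    proof (rule ccontr)
      assume ne: "N \<noteq> {}"
      have "x \<bullet> w = (\<Sum>p\<in>N. (- c p) * (x \<bullet> p))" unfolding w2 by (simp add: inner_sum_right)
      also have "\<dots> > 0" using ne finN xb unfolding N_def by (intro sum_pos) (auto simp: mult_neg_pos)
      finally show False using \<open>w = 0\<close> by simp
    qed
    show "c v = 0" using \<open>P = {}\<close> \<open>N = {}\<close> v unfolding P_def N_def by (metis (mono_tags, lifting) empty_iff linorder_neqE_linordered_idom mem_Collect_eq)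
  qed
qed

lemma pos_induct:
  assumes wc: "weyl_chamber R C" and fin: "finite R"
    and simple_case: "\<And>b. b \<in> simple_roots R C \<Longrightarrow> P b"
    and add_case: "\<And>b c. b \<in> pos_roots R C \<Longrightarrow> c \<in> pos_roots R C \<Longrightarrow> b + c \<in> pos_roots R C
                      \<Longrightarrow> P b \<Longrightarrow> P c \<Longrightarrow> P (b + c)"
    and a: "a \<in> pos_roots R C"
  shows "P a"
proof -
  obtain x where x: "x \<in> C" using chamber_basic(1)[OF wc] by blast
  define f where "f a = card {d\<in>pos_roots R C. x \<bullet> d < x \<bullet> a}" for a
  have finP: "finite (pos_roots R C)" using fin pos_sub_R by (metis finite_subset)
  have flt: "f d < f a" if "d \<in> pos_roots R C" "x \<bullet> d < x \<bullet> a" for d a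
    unfolding f_def
    by (rule psubset_card_mono) (use finP that in auto)
  have "a \<in> pos_roots R C \<longrightarrow> P a"
  proof (induction a rule: measure_induct_rule[of f])
    case (less a)
    show ?case
    proof
      assume a: "a \<in> pos_roots R C"
      show "P a"
      proof (cases "a \<in> simple_roots R C")
        case True thus ?thesis by (rule simple_case)
      next
        case False
        then obtain b c where b: "b \<in> pos_roots R C" and c: "c \<in> pos_roots R C" and abc: "a = b + c"
          using a unfolding simple_roots_def by blast
        have "x \<bullet> b > 0" "x \<bullet> c > 0" using x b c unfolding pos_roots_def by auto
        hence "x \<bullet> b < x \<bullet> a" "x \<bullet> c < x \<bullet> a" using abc by (auto simp: inner_add_right)
        hence "P b" "P c" using less flt b c by blast+
        thus ?thesis using add_case[OF b c] a abc by simp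
      qed
    qed
  qed
  thus ?thesis using a by blast
qed



theorem mainTheorem10:
  fixes R Q C :: "'a::euclidean_space set" and s :: "'a \<Rightarrow> 'a"
  assumes "reduced_root_system R"
    and "parabolic_subset R Q"
    and "root_involution R s"
    and "V_fit R Q s C"
  shows "(Q \<union> s ` Q = R \<longleftrightarrow> s ` nilpart Q \<subseteq> neg_roots R C)
       \<and> (s ` nilpart Q \<subseteq> neg_roots R C \<longleftrightarrow> s ` Phi R Q C \<subseteq> neg_roots R C)"
proof -
  note rr = assms(1)
  have finR: "finite R" using rr unfolding reduced_root_system_def by blast
  have QR: "Q \<subseteq> R" and Qcl: "\<And>a b. a \<in> Q \<Longrightarrow> b \<in> Q \<Longrightarrow> a + b \<in> R \<Longrightarrow> a + b \<in> Q"
    and QU: "Q \<union> uminus ` Q = R"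
    using assms(2) unfolding parabolic_subset_def closed_subset_def by blast+
  have lin: "linear s" and ss: "\<And>x. s (s x) = x" and sR: "s ` R = R"
    using assms(3) unfolding root_involution_def by blast+
  have wc: "weyl_chamber R C" and posQ: "pos_roots R C \<subseteq> Q"
    and vfit: "\<And>a. a \<in> simple_roots R C - Phi R Q C \<Longrightarrow> complex_root s a \<Longrightarrow> s a \<in> neg_roots R C"
    using assms(4) unfolding V_fit_def admissible_def by blast+
  let ?B = "simple_roots R C" and ?P = "Phi R Q C" and ?pos = "pos_roots R C" and ?neg = "neg_roots R C"
  obtain h :: "'a \<Rightarrow> real" where hlin: "linear h" and hB: "\<And>b. b \<in> ?B \<Longrightarrow> h b = (if b \<in> ?P then 1 else 0)"
    using linear_independent_extend[OF simple_indep[OF rr wc], of "\<lambda>b. if b \<in> ?P then 1 else 0"] by blast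
  have sRin: "s a \<in> R" if "a \<in> R" for a using sR that by blast
  have hpos: "h g \<ge> 0" if "g \<in> ?pos" for g
    using wc finR _ _ that
  proof (rule pos_induct[where P = "\<lambda>g. h g \<ge> 0"])
    fix b assume "b \<in> ?B" thus "h b \<ge> 0" using hB by simp
  next
    fix b c assume "h b \<ge> 0" "h c \<ge> 0" thus "h (b + c) \<ge> 0" using linear_add[OF hlin] by simp
  qed
  have hneg: "h g \<le> 0" if "g \<in> ?neg" for g
  proof -
    have "h (-g) \<ge> 0" using hpos neg_imp_pos[OF rr that] by blast
    thus ?thesis using linear_neg[OF hlin] by simp
  qed
  have hzero: "h g = 0 \<longrightarrow> -g \<in> Q" if "g \<in> ?pos" for g
    using wc finR _ _ that
  proof (rule pos_induct[where P = "\<lambda>g. h g = 0 \<longrightarrow> -g \<in> Q"])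
    fix b assume b: "b \<in> ?B"
    show "h b = 0 \<longrightarrow> -b \<in> Q"
    proof
      assume "h b = 0"
      hence "b \<notin> ?P" using hB[OF b] by auto
      hence "b \<notin> nilpart Q" using b unfolding Phi_def by blast
      moreover have "b \<in> Q" using b simple_sub_pos posQ by blast
      ultimately show "-b \<in> Q" unfolding nilpart_def by blast
    qed
  next
    fix b c assume b: "b \<in> ?pos" and c: "c \<in> ?pos" and bc: "b + c \<in> ?pos"
      and ib: "h b = 0 \<longrightarrow> -b \<in> Q" and ic: "h c = 0 \<longrightarrow> -c \<in> Q"
    show "h (b + c) = 0 \<longrightarrow> -(b + c) \<in> Q"
    proof
      assume "h (b + c) = 0"
      hence "h b + h c = 0" using linear_add[OF hlin] by simp
      hence "h b = 0" "h c = 0" using hpos[OF b] hpos[OF c] by linarith+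
      hence "-b \<in> Q" "-c \<in> Q" using ib ic by blast+
      moreover have "-b + -c \<in> R" using rr_neg[OF rr] bc pos_sub_R by fastforce
      ultimately have "-b + -c \<in> Q" using Qcl by blast
      thus "-(b + c) \<in> Q" by simp
    qed
  qed
  have hposQ: "h g > 0 \<longrightarrow> -g \<notin> Q" if "g \<in> ?pos" for g
    using wc finR _ _ that
  proof (rule pos_induct[where P = "\<lambda>g. h g > 0 \<longrightarrow> -g \<notin> Q"])
    fix b assume b: "b \<in> ?B"
    show "h b > 0 \<longrightarrow> -b \<notin> Q"
    proof
      assume "h b > 0"
      hence "b \<in> ?P" using hB[OF b] by (auto split: if_splits)
      thus "-b \<notin> Q" unfolding Phi_def nilpart_def by blast
    qed
  next
    fix b c assume b: "b \<in> ?pos" and c: "c \<in> ?pos" and bc: "b + c \<in> ?pos"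
      and ib: "h b > 0 \<longrightarrow> -b \<notin> Q" and ic: "h c > 0 \<longrightarrow> -c \<notin> Q"
    show "h (b + c) > 0 \<longrightarrow> -(b + c) \<notin> Q"
    proof (intro impI notI)
      assume hp: "h (b + c) > 0" and m: "-(b + c) \<in> Q"
      hence "h b + h c > 0" using linear_add[OF hlin] by simp
      hence "h b > 0 \<or> h c > 0" by linarith
      thus False
      proof
        assume "h b > 0"
        hence nb: "-b \<notin> Q" using ib by blast
        have "-(b + c) + c \<in> R" using rr_neg[OF rr] b pos_sub_R by fastforce
        hence "-(b + c) + c \<in> Q" using Qcl m c posQ by blast
        thus False using nb by simp
      next
        assume "h c > 0"
        hence nc: "-c \<notin> Q" using ic by blast
        have "-(b + c) + b \<in> R" using rr_neg[OF rr] c pos_sub_R by fastforce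
        hence "-(b + c) + b \<in> Q" using Qcl m b posQ by blast
        thus False using nc by simp
      qed
    qed
  qed
  define A where "A = (\<forall>p\<in>?P. s p \<in> ?neg)"
  have M: "(h g = 0 \<or> A) \<longrightarrow> h (s g) \<le> 0" if "g \<in> ?pos" for g
    using wc finR _ _ that
  proof (rule pos_induct[where P = "\<lambda>g. (h g = 0 \<or> A) \<longrightarrow> h (s g) \<le> 0"])
    fix b assume b: "b \<in> ?B"
    show "(h b = 0 \<or> A) \<longrightarrow> h (s b) \<le> 0"
    proof
      assume hA: "h b = 0 \<or> A"
      show "h (s b) \<le> 0"
      proof (cases "b \<in> ?P")
        case True
        hence "A" using hA hB[OF b] by auto
        thus ?thesis using True hneg unfolding A_def by blast
      next
        case False
        hence h0: "h b = 0" using hB[OF b] by simp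
        show ?thesis
        proof (cases "complex_root s b")
          case True
          thus ?thesis using vfit[of b] b False hneg by blast
        next
          case nc: False
          hence "s b = b \<or> s b = -b" unfolding complex_root_def by blast
          thus ?thesis using h0 linear_neg[OF hlin, of b] by auto
        qed
      qed
    qed
  next
    fix b c assume b: "b \<in> ?pos" and c: "c \<in> ?pos"
      and ib: "(h b = 0 \<or> A) \<longrightarrow> h (s b) \<le> 0" and ic: "(h c = 0 \<or> A) \<longrightarrow> h (s c) \<le> 0"
    show "(h (b + c) = 0 \<or> A) \<longrightarrow> h (s (b + c)) \<le> 0"
    proof
      assume hA: "h (b + c) = 0 \<or> A"
      have "h b = 0 \<and> h c = 0 \<or> A"
      proof (cases A)
        case False
        hence "h b + h c = 0" using hA linear_add[OF hlin] by simp
        thus ?thesis using hpos[OF b] hpos[OF c] by linarith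
      qed simp
      hence "h (s b) \<le> 0" "h (s c) \<le> 0" using ib ic by blast+
      thus "h (s (b + c)) \<le> 0" using linear_add[OF hlin] linear_add[OF lin] by simp
    qed
  qed
  have nilpos: "a \<in> ?pos" if "a \<in> nilpart Q" for a
  proof -
    have aQ: "a \<in> Q" "-a \<notin> Q" using that unfolding nilpart_def by auto
    hence aR: "a \<in> R" using QR by blast
    show ?thesis
    proof (rule ccontr)
      assume "a \<notin> ?pos"
      hence "a \<in> ?neg" using chamber_sign[OF wc aR] by blast
      hence "-a \<in> ?pos" by (rule neg_imp_pos[OF rr])
      thus False using aQ posQ by blast
    qed
  qed
  have nilh: "h a > 0" if "a \<in> nilpart Q" for a
  proof -
    have "-a \<notin> Q" using that unfolding nilpart_def by auto
    hence "h a \<noteq> 0" using hzero[OF nilpos[OF that]] by blast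
    thus ?thesis using hpos[OF nilpos[OF that]] by linarith
  qed
  have sa_pos_neg: "s a \<in> ?pos \<or> s a \<in> ?neg" if "a \<in> nilpart Q" for a
    using chamber_sign[OF wc sRin] nilpos[OF that] pos_sub_R that by blast
  have i12: "s ` nilpart Q \<subseteq> ?neg" if one: "Q \<union> s ` Q = R"
  proof
    fix y assume "y \<in> s ` nilpart Q"
    then obtain a where a: "a \<in> nilpart Q" and y: "y = s a" by blast
    have "-a \<in> R" using rr_neg[OF rr] nilpos[OF a] pos_sub_R by blast
    moreover have "-a \<notin> Q" using a unfolding nilpart_def by auto
    ultimately have "-a \<in> s ` Q" using one by blast
    then obtain q where q: "q \<in> Q" "-a = s q" by blast
    have sq: "s (-a) = q" using q(2) ss by metis
    have "s (-a) = - s a" by (rule linear_neg[OF lin])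
    hence msa: "- s a \<in> Q" using q(1) sq by simp
    show "y \<in> ?neg"
    proof (rule ccontr)
      assume "y \<notin> ?neg"
      hence sp: "s a \<in> ?pos" using sa_pos_neg[OF a] y by blast
      have "\<not> h (s a) > 0" using hposQ[OF sp] msa by blast
      hence "h (s a) = 0" using hpos[OF sp] by linarith
      hence "h (s (s a)) \<le> 0" using M[OF sp] by blast
      thus False using nilh[OF a] ss by simp
    qed
  qed
  have i21: "Q \<union> s ` Q = R" if two: "s ` nilpart Q \<subseteq> ?neg"
  proof
    show "Q \<union> s ` Q \<subseteq> R" using QR sR by blast
    show "R \<subseteq> Q \<union> s ` Q"
    proof
      fix g assume g: "g \<in> R"
      show "g \<in> Q \<union> s ` Q"
      proof (cases "g \<in> Q")
        case False
        hence "-g \<in> Q" using g QU by force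
        hence "-g \<in> nilpart Q" using False unfolding nilpart_def by simp
        hence "s (-g) \<in> ?neg" using two by blast
        hence "- s (-g) \<in> ?pos" by (rule neg_imp_pos[OF rr])
        hence "s g \<in> Q" using posQ linear_neg[OF lin] by auto
        hence "s (s g) \<in> s ` Q" by blast
        thus ?thesis using ss by simp
      qed simp
    qed
  qed
  have i23: "s ` ?P \<subseteq> ?neg" if "s ` nilpart Q \<subseteq> ?neg"
    using that unfolding Phi_def by blast
  have i32: "s ` nilpart Q \<subseteq> ?neg" if three: "s ` ?P \<subseteq> ?neg"
  proof
    fix y assume "y \<in> s ` nilpart Q"
    then obtain a where a: "a \<in> nilpart Q" and y: "y = s a" by blast
    show "y \<in> ?neg"
    proof (rule ccontr)
      assume "y \<notin> ?neg"
      hence sp: "s a \<in> ?pos" using sa_pos_neg[OF a] y by blast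
      have "A" using three unfolding A_def by blast
      hence "h (s (s a)) \<le> 0" using M[OF sp] by blast
      thus False using nilh[OF a] ss by simp
    qed
  qed
  show ?thesis using i12 i21 i23 i32 by blast
qed


end
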